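(* Let $k$ be a field of characteristic not $2$ or $3$, let $\mathcal{A}\in k^{n+1}\otimes\operatorname{Sym}_2k^{m+1}$ and let $\mathfrak{C}\subseteq\mathbb{P}^m$ be its Cayley variety. If $\ell$ is a secant line of $\mathfrak{C}$ not contained in $\mathfrak{C}$, then $\psi(\ell)$ is a single point of $\widehat{\mathbb{P}}^n$. Conversely, if $\ell$ is a line such that $\psi(\ell)$ is a single point, then $\ell$ is a secant line of $\mathfrak{C}$.
   Context: $\mathcal{A}$ is an $(n+1)$-tuple $(A_0,\dots,A_n)$ of symmetric $(m+1)\times(m+1)$ matrices; $\mathfrak{C}=Z(\mathbf{y}^TA_0\mathbf{y},\dots,\mathbf{y}^TA_n\mathbf{y})$; $\psi:\mathbb{P}^m\dashrightarrow\widehat{\mathbb{P}}^n$, $y\mapsto(y^TA_0y:\dots:y^TA_ny)$, and $\psi(\ell)$ means the image of the points of $\ell$ where $\psi$ is defined. A secant line of $\mathfrak{C}$ is a line meeting $\mathfrak{C}$ in a subscheme of length at least $2$, i.e. either through two distinct points of $\mathfrak{C}$ or tangent to $\mathfrak{C}$ at a point. *)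

theory Defs
  imports "HOL-Analysis.Analysis"
begin

text \<open>Points of P^m are represented by nonzero vectors in k^(m+1) = 'a^'m (index type 'm
has m+1 elements); points of the dual P^n by nonzero vectors indexed by 'n (n+1 elements).\<close>

definition symmetric_mat :: "'a^'m^'m \<Rightarrow> bool" where
  "symmetric_mat M \<longleftrightarrow> (\<forall>i j. M $ i $ j = M $ j $ i)"

definition qform :: "('a::comm_ring_1)^'m^'m \<Rightarrow> 'a^'m \<Rightarrow> 'a" where
  "qform M y = (\<Sum>i\<in>UNIV. \<Sum>j\<in>UNIV. y $ i * M $ i $ j * y $ j)"

definition psi :: "('n \<Rightarrow> ('a::comm_ring_1)^'m^'m) \<Rightarrow> 'a^'m \<Rightarrow> 'a^'n" where
  "psi As y = (\<chi> i. qform (As i) y)"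

definition indep2 :: "('a::field)^'m \<Rightarrow> 'a^'m \<Rightarrow> bool" where
  "indep2 p r \<longleftrightarrow> (\<forall>s t. s *s p + t *s r = 0 \<longrightarrow> s = 0 \<and> t = 0)"

definition line_pts :: "('a::field)^'m \<Rightarrow> 'a^'m \<Rightarrow> ('a^'m) set" where
  "line_pts p r = {s *s p + t *s r | s t. s \<noteq> 0 \<or> t \<noteq> 0}"

text \<open>psi(l): images of the points of l where psi is defined (representatives)\<close>
definition psi_image :: "('n \<Rightarrow> ('a::field)^'m^'m) \<Rightarrow> 'a^'m \<Rightarrow> 'a^'m \<Rightarrow> ('a^'n) set" where
  "psi_image As p r = {psi As y | y. y \<in> line_pts p r \<and> psi As y \<noteq> 0}"

definition single_proj_point :: "(('a::field)^'n) set \<Rightarrow> bool" where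
  "single_proj_point S \<longleftrightarrow> S \<noteq> {} \<and> 0 \<notin> S \<and>
     (\<forall>x\<in>S. \<forall>z\<in>S. \<exists>c. c \<noteq> 0 \<and> x = c *s z)"

definition line_in_cayley :: "('n \<Rightarrow> ('a::field)^'m^'m) \<Rightarrow> 'a^'m \<Rightarrow> 'a^'m \<Rightarrow> bool" where
  "line_in_cayley As p r \<longleftrightarrow> (\<forall>y\<in>line_pts p r. \<forall>i. qform (As i) y = 0)"

text \<open>Secant line: the scheme-theoretic intersection of l = P^1 (coordinates (s:t)) with C,
cut out by the binary quadratic forms Q_i(s,t) = (sp+tr)^T A_i (sp+tr), has length >= 2,
i.e. it contains a length-2 subscheme of P^1, i.e. the divisor Z(f) of a nonzero binary
quadratic form f = f0 s^2 + f1 s t + f2 t^2 over k; equivalently every Q_i lies in the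
degree-2 part of the ideal (f), i.e. is a scalar multiple of f.\<close>
definition secant_line :: "('n \<Rightarrow> ('a::field)^'m^'m) \<Rightarrow> 'a^'m \<Rightarrow> 'a^'m \<Rightarrow> bool" where
  "secant_line As p r \<longleftrightarrow>
    (\<exists>f0 f1 f2 :: 'a. (f0 \<noteq> 0 \<or> f1 \<noteq> 0 \<or> f2 \<noteq> 0) \<and>
       (\<forall>i. \<exists>c. \<forall>s t. qform (As i) (s *s p + t *s r) = c * (f0 * s^2 + f1 * s * t + f2 * t^2)))"

end

theory Submission
  imports Defs
begin

definition bil2 :: "('a::comm_ring_1)^'m^'m \<Rightarrow> 'a^'m \<Rightarrow> 'a^'m \<Rightarrow> 'a" where
  "bil2 M p r = (\<Sum>i\<in>UNIV. \<Sum>j\<in>UNIV. p $ i * M $ i $ j * r $ j + r $ i * M $ i $ j * p $ j)"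

lemma qform_expand:
  fixes M :: "('a::field)^'m::finite^'m"
  shows "qform M (s *s p + t *s r) = s^2 * qform M p + s * t * bil2 M p r + t^2 * qform M r"
  unfolding qform_def bil2_def
  by (simp add: sum_distrib_left sum.distrib[symmetric] algebra_simps power2_eq_square)

lemma psi_comp: "psi As y $ i = qform (As i) y"
  by (simp add: psi_def)

theorem lemma5p1p1:
  fixes As :: "'n::finite \<Rightarrow> ('a::field)^'m::finite^'m"
    and p r :: "'a^'m"
  assumes char2: "(2::'a) \<noteq> 0" and char3: "(3::'a) \<noteq> 0"
    and sym: "\<forall>i. symmetric_mat (As i)"
    and line: "indep2 p r"
  shows "(secant_line As p r \<and> \<not> line_in_cayley As p r \<longrightarrow> single_proj_point (psi_image As p r))
       \<and> (single_proj_point (psi_image As p r) \<longrightarrow> secant_line As p r)"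
proof (intro conjI impI)
  assume H: "secant_line As p r \<and> \<not> line_in_cayley As p r"
  then obtain f0 f1 f2 :: 'a where
    fc: "\<forall>i. \<exists>c. \<forall>s t. qform (As i) (s *s p + t *s r) = c * (f0 * s^2 + f1 * s * t + f2 * t^2)"
    unfolding secant_line_def by blast
  then obtain C where C: "\<And>i s t. qform (As i) (s *s p + t *s r) = C i * (f0 * s^2 + f1 * s * t + f2 * t^2)"
    by metis
  define F where "F s t = f0 * s^2 + f1 * s * t + f2 * t^2" for s t
  define Cv :: "'a^'n" where "Cv = (\<chi> i. C i)"
  have P: "psi As (s *s p + t *s r) = F s t *s Cv" for s t
    by (simp add: vec_eq_iff psi_comp C F_def Cv_def mult.commute distrib_left)
  from H obtain y i0 where y: "y \<in> line_pts p r" and yi: "qform (As i0) y \<noteq> 0"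
    unfolding line_in_cayley_def by blast
  have yS: "psi As y \<in> psi_image As p r"
    unfolding psi_image_def using y yi by (auto simp: vec_eq_iff psi_comp)
  show "single_proj_point (psi_image As p r)"
    unfolding single_proj_point_def
  proof (intro conjI ballI)
    show "psi_image As p r \<noteq> {}" using yS by blast
    show "0 \<notin> psi_image As p r" unfolding psi_image_def by auto
    fix x z assume x: "x \<in> psi_image As p r" and z: "z \<in> psi_image As p r"
    from x obtain s1 t1 where x1: "x = F s1 t1 *s Cv" "x \<noteq> 0"
      unfolding psi_image_def line_pts_def using P by blast
    from z obtain s2 t2 where z1: "z = F s2 t2 *s Cv" "z \<noteq> 0"
      unfolding psi_image_def line_pts_def using P by blast
    have "F s1 t1 \<noteq> 0" "F s2 t2 \<noteq> 0" using x1 z1 by auto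
    then show "\<exists>c. c \<noteq> 0 \<and> x = c *s z"
      using x1 z1 by (intro exI[of _ "F s1 t1 / F s2 t2"]) (simp add: vec_eq_iff)
  qed
next
  assume H: "single_proj_point (psi_image As p r)"
  then obtain z where zS: "z \<in> psi_image As p r" unfolding single_proj_point_def by blast
  then obtain s0 t0 where z0: "z = psi As (s0 *s p + t0 *s r)" "z \<noteq> 0"
    unfolding psi_image_def line_pts_def by blast
  obtain j where zj: "z $ j \<noteq> 0" using z0(2) by (metis vec_eq_iff zero_index)
  have lam: "\<exists>c. psi As (s *s p + t *s r) = c *s z" for s t
  proof (cases "s = 0 \<and> t = 0")
    case True
    then have "psi As (s *s p + t *s r) = 0"
      by (simp add: vec_eq_iff psi_comp qform_def)
    then show ?thesis by (intro exI[of _ 0]) simp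
  next
    case False
    show ?thesis
    proof (cases "psi As (s *s p + t *s r) = 0")
      case True then show ?thesis by (intro exI[of _ 0]) simp
    next
      case F: False
      have "psi As (s *s p + t *s r) \<in> psi_image As p r"
        unfolding psi_image_def line_pts_def using False F by blast
      then show ?thesis using H zS unfolding single_proj_point_def by blast
    qed
  qed
  have rel: "qform (As i) (s *s p + t *s r) = (z $ i / z $ j) * qform (As j) (s *s p + t *s r)" for i s t
  proof -
    obtain c where c: "psi As (s *s p + t *s r) = c *s z" using lam by blast
    have "qform (As i) (s *s p + t *s r) = c * z $ i"
      using arg_cong[OF c, of "\<lambda>v. v $ i"] by (simp add: psi_comp)
    moreover have "qform (As j) (s *s p + t *s r) = c * z $ j"
      using arg_cong[OF c, of "\<lambda>v. v $ j"] by (simp add: psi_comp)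
    ultimately show ?thesis using zj by (simp add: field_simps)
  qed
  define f0 where "f0 = qform (As j) p"
  define f1 where "f1 = bil2 (As j) p r"
  define f2 where "f2 = qform (As j) r"
  have ex: "qform (As j) (s *s p + t *s r) = f0 * s^2 + f1 * s * t + f2 * t^2" for s t
    unfolding f0_def f1_def f2_def qform_expand by (simp add: algebra_simps)
  have nz: "f0 \<noteq> 0 \<or> f1 \<noteq> 0 \<or> f2 \<noteq> 0"
  proof (rule ccontr)
    assume "\<not> ?thesis"
    then have "qform (As j) (s0 *s p + t0 *s r) = 0" using ex by simp
    then show False using zj z0(1) by (simp add: psi_comp)
  qed
  show "secant_line As p r"
    unfolding secant_line_def
    using nz rel ex by (intro exI[of _ f0] exI[of _ f1] exI[of _ f2]) metis
qed

end
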